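(* (Compactness Extrapolation Lemma.) Fix a dimension $d\geq1$ and real numbers $s_0<s_1$. Let $(u^\varepsilon)_{\varepsilon\in(0,1]}$ be a family of functions bounded in $\dot H^{s_0}\cap\dot H^{s_1}(\mathbb{R}^d)$ uniformly in $\varepsilon\in(0,1]$, and assume $u^\varepsilon\to u$ in $\dot H^{s_0}(\mathbb{R}^d)$ as $\varepsilon\to0$. Then $u^\varepsilon\to u$ in $\dot H^{s_1}(\mathbb{R}^d)$ if and only if $$\lim_{\varepsilon\to0}\|\mathds{1}_{|D|\geq\Theta_\varepsilon}u^\varepsilon\|_{\dot H^{s_1}}=0$$ for some $\Theta_\varepsilon>0$ satisfying $$\lim_{\varepsilon\to0}\Theta_\varepsilon=\infty\quad\text{and}\quad\lim_{\varepsilon\to0}\Theta_\varepsilon^{s_1-s_0}\|u^\varepsilon-u\|_{\dot H^{s_0}}=0.$$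
   Context: $\dot H^s(\mathbb{R}^d)$ denotes the homogeneous Sobolev space with norm $\||D|^s f\|_{L^2}$. For a bounded function $m$, $m(D)f=\mathcal{F}^{-1}(m(\xi)\mathcal{F}f(\xi))$; in particular $\mathds{1}_{|D|\geq\Theta}$ is the Fourier multiplier by the indicator of $\{|\xi|\geq\Theta\}$. *)

theory Defs
  imports "HOL-Analysis.Analysis"
begin

text \<open>Functions are represented on the Fourier side: a tempered distribution u is
  represented by its Fourier transform, a measurable function on the frequency space
  'a (any Euclidean space of dimension d = DIM('a) \<ge> 1). By Plancherel,
  the homogeneous Sobolev norm is the weighted L2 norm below.\<close>

definition hs_sq :: "real \<Rightarrow> ('a::euclidean_space \<Rightarrow> complex) \<Rightarrow> ennreal" where
  "hs_sq s f = (\<integral>\<^sup>+ \<xi>. ennreal ((norm \<xi> powr s * cmod (f \<xi>))\<^sup>2) \<partial>lborel)"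

definition hnorm :: "real \<Rightarrow> ('a::euclidean_space \<Rightarrow> complex) \<Rightarrow> ennreal" where
  "hnorm s f = (if hs_sq s f = \<infinity> then \<infinity> else ennreal (sqrt (enn2real (hs_sq s f))))"

definition high_freq :: "real \<Rightarrow> ('a::euclidean_space \<Rightarrow> complex) \<Rightarrow> ('a \<Rightarrow> complex)" where
  "high_freq \<Theta> f = (\<lambda>\<xi>. if norm \<xi> \<ge> \<Theta> then f \<xi> else 0)"

end

theory Submission
  imports Defs
begin

lemma hs_meas[measurable]:
  "f \<in> borel_measurable borel \<Longrightarrow> (\<lambda>\<xi>::'a::euclidean_space. ennreal ((norm \<xi> powr s * cmod (f \<xi>))\<^sup>2)) \<in> borel_measurable lborel"
  by measurable

lemma hf_meas[measurable]:
  assumes [measurable]: "f \<in> borel_measurable borel"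
  shows "high_freq R (f::'a::euclidean_space \<Rightarrow> complex) \<in> borel_measurable borel"
proof -
  have S: "{\<xi>::'a. R \<le> norm \<xi>} \<in> sets borel" by measurable
  show ?thesis unfolding high_freq_def by (rule measurable_If) (auto simp: assms S)
qed

lemma hnorm_sq: "(hnorm s f)^2 = hs_sq s f"
proof (cases "hs_sq s f = \<infinity>")
  case True then show ?thesis by (simp add: hnorm_def)
next
  case False
  then have "hs_sq s f = ennreal (enn2real (hs_sq s f))" by (simp add: less_top)
  moreover have "(ennreal (sqrt (enn2real (hs_sq s f))))^2 = ennreal (enn2real (hs_sq s f))"
    by (simp add: ennreal_power enn2real_nonneg)
  ultimately show ?thesis using False by (simp add: hnorm_def)
qed

lemma tendsto_sq_iff: "((f::_\<Rightarrow>ennreal) \<longlongrightarrow> 0) F \<longleftrightarrow> ((\<lambda>x. (f x)^2) \<longlongrightarrow> 0) F"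
proof
  assume "(f \<longlongrightarrow> 0) F"
  then have "((\<lambda>x. f x * f x) \<longlongrightarrow> 0 * 0) F"
    by (intro tendsto_mult_ennreal) auto
  then show "((\<lambda>x. (f x)^2) \<longlongrightarrow> 0) F" by (simp add: power2_eq_square)
next
  assume A: "((\<lambda>x. (f x)^2) \<longlongrightarrow> 0) F"
  show "(f \<longlongrightarrow> 0) F"
    unfolding order_tendsto_iff
  proof (intro conjI allI impI)
    fix e :: ennreal assume "e > 0"
    define e' where "e' = min e 1"
    have "e' > 0" using \<open>e > 0\<close> by (simp add: e'_def)
    then have "e'^2 > 0" by (simp add: power2_eq_square ennreal_zero_less_mult_iff)
    then have "eventually (\<lambda>x. (f x)^2 < e'^2) F" using A unfolding order_tendsto_iff by auto
    then show "eventually (\<lambda>x. f x < e) F"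
    proof (rule eventually_mono)
      fix x assume "(f x)^2 < e'^2"
      then have "f x < e'"
        by (metis leI not_le power_mono zero_le)
      then show "f x < e" by (simp add: e'_def)
    qed
  qed simp
qed

lemma mult_sq: "c \<ge> 0 \<Longrightarrow> (ennreal c * hnorm s f)^2 = ennreal (c^2) * hs_sq s f"
  by (simp add: power_mult_distrib hnorm_sq ennreal_power)


lemma sq_sum_le: "((x::real) + y)^2 \<le> 2 * x^2 + 2 * y^2"
proof -
  have "0 \<le> (x - y)^2" by simp
  then show ?thesis by (simp add: power2_eq_square algebra_simps)
qed

lemma hs_tri:
  assumes [measurable]: "f \<in> borel_measurable borel" "g \<in> borel_measurable borel"
    and H: "\<And>\<xi>. cmod (h \<xi>) \<le> cmod (f \<xi>) + cmod (g \<xi>)"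
  shows "hs_sq s (h::'a::euclidean_space \<Rightarrow> complex) \<le> 2 * hs_sq s f + 2 * hs_sq s g"
proof -
  have "hs_sq s h \<le> (\<integral>\<^sup>+\<xi>. 2 * ennreal ((norm \<xi> powr s * cmod (f \<xi>))\<^sup>2) + 2 * ennreal ((norm \<xi> powr s * cmod (g \<xi>))\<^sup>2) \<partial>lborel)"
    unfolding hs_sq_def
  proof (rule nn_integral_mono)
    fix \<xi> :: 'a
    define w where "w = norm \<xi> powr s"
    have w: "w \<ge> 0" by (simp add: w_def)
    have "w * cmod (h \<xi>) \<le> w * cmod (f \<xi>) + w * cmod (g \<xi>)"
      using mult_left_mono[OF H w] by (simp add: algebra_simps)
    then have "(w * cmod (h \<xi>))^2 \<le> (w * cmod (f \<xi>) + w * cmod (g \<xi>))^2"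
      by (intro power_mono) (use w in auto)
    also have "\<dots> \<le> 2 * (w * cmod (f \<xi>))^2 + 2 * (w * cmod (g \<xi>))^2" by (rule sq_sum_le)
    finally have "ennreal ((w * cmod (h \<xi>))^2) \<le> ennreal (2 * (w * cmod (f \<xi>))^2 + 2 * (w * cmod (g \<xi>))^2)"
      by (rule ennreal_leI)
    also have "\<dots> = 2 * ennreal ((w * cmod (f \<xi>))^2) + 2 * ennreal ((w * cmod (g \<xi>))^2)"
      by (simp add: ennreal_mult)
    finally show "ennreal ((norm \<xi> powr s * cmod (h \<xi>))^2) \<le> 2 * ennreal ((norm \<xi> powr s * cmod (f \<xi>))^2) + 2 * ennreal ((norm \<xi> powr s * cmod (g \<xi>))^2)"
      by (simp add: w_def)
  qed
  also have "\<dots> = 2 * hs_sq s f + 2 * hs_sq s g"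
    unfolding hs_sq_def by (simp add: nn_integral_add nn_integral_cmult)
  finally show ?thesis .
qed

lemma hs_low:
  assumes [measurable]: "g \<in> borel_measurable borel" and "R > 0" and "s0 \<le> s1"
  shows "hs_sq s1 (\<lambda>\<xi>::'a::euclidean_space. if norm \<xi> < R then g \<xi> else 0) \<le> ennreal (R powr (2*(s1-s0))) * hs_sq s0 g"
proof -
  have "hs_sq s1 (\<lambda>\<xi>::'a::euclidean_space. if norm \<xi> < R then g \<xi> else 0) \<le> (\<integral>\<^sup>+\<xi>. ennreal (R powr (2*(s1-s0))) * ennreal ((norm \<xi> powr s0 * cmod (g \<xi>))\<^sup>2) \<partial>lborel)"
    unfolding hs_sq_def
  proof (rule nn_integral_mono)
    fix \<xi> :: 'a
    show "ennreal ((norm \<xi> powr s1 * cmod (if norm \<xi> < R then g \<xi> else 0))^2) \<le> ennreal (R powr (2*(s1-s0))) * ennreal ((norm \<xi> powr s0 * cmod (g \<xi>))\<^sup>2)"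
    proof (cases "norm \<xi> < R")
      case False then show ?thesis by simp
    next
      case True
      have key: "norm \<xi> powr s1 \<le> R powr (s1-s0) * norm \<xi> powr s0"
      proof (cases "\<xi> = 0")
        case True then show ?thesis by simp
      next
        case False
        have "norm \<xi> powr s1 = norm \<xi> powr (s1-s0) * norm \<xi> powr s0"
          by (simp add: powr_add[symmetric])
        also have "\<dots> \<le> R powr (s1-s0) * norm \<xi> powr s0"
          by (intro mult_right_mono powr_mono2) (use True assms in auto)
        finally show ?thesis .
      qed
      have "norm \<xi> powr s1 * cmod (g \<xi>) \<le> R powr (s1-s0) * (norm \<xi> powr s0 * cmod (g \<xi>))"
        using mult_right_mono[OF key norm_ge_zero[of "g \<xi>"]] by (simp add: algebra_simps)
      then have "(norm \<xi> powr s1 * cmod (g \<xi>))^2 \<le> (R powr (s1-s0) * (norm \<xi> powr s0 * cmod (g \<xi>)))^2"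
        by (intro power_mono) auto
      also have "\<dots> = R powr (2*(s1-s0)) * (norm \<xi> powr s0 * cmod (g \<xi>))^2"
        by (simp add: power_mult_distrib powr_add[symmetric] power2_eq_square)
      finally show ?thesis using True
        by (simp add: ennreal_mult[symmetric] ennreal_leI)
    qed
  qed
  also have "\<dots> = ennreal (R powr (2*(s1-s0))) * hs_sq s0 g"
    unfolding hs_sq_def by (simp add: nn_integral_cmult)
  finally show ?thesis .
qed


lemma hs_high_anti:
  "R \<le> R' \<Longrightarrow> hs_sq s (high_freq R' g) \<le> hs_sq s (high_freq R (g::'a::euclidean_space \<Rightarrow> complex))"
  unfolding hs_sq_def high_freq_def by (intro nn_integral_mono) auto

lemma hs_tail:
  assumes [measurable]: "g \<in> borel_measurable borel" and fin: "hs_sq s g < \<infinity>"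
    and Th: "filterlim \<Theta> at_top F"
  shows "((\<lambda>x. hs_sq s (high_freq (\<Theta> x) (g::'a::euclidean_space \<Rightarrow> complex))) \<longlongrightarrow> 0) F"
proof -
  define T where "T R = hs_sq s (high_freq R g)" for R
  define f where "f i \<xi> = ennreal ((norm \<xi> powr s * cmod (high_freq (real i) g \<xi>))\<^sup>2)" for i \<xi>
  have Tf: "T (real i) = integral\<^sup>N lborel (f i)" for i
    unfolding T_def f_def hs_sq_def by simp
  have fmeas: "f i \<in> borel_measurable lborel" for i
    unfolding f_def by measurable
  have fdec: "f (Suc i) \<xi> \<le> f i \<xi>" for i \<xi>
    unfolding f_def high_freq_def by auto
  have g0: "high_freq 0 g = g" by (auto simp: high_freq_def)
  have f0: "(\<integral>\<^sup>+ x. f 0 x \<partial>lborel) < \<infinity>"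
    using fin Tf[of 0] by (simp add: T_def g0)
  have INF0: "(INF i. f i \<xi>) = 0" for \<xi>
  proof -
    obtain n :: nat where "norm \<xi> < real n" using reals_Archimedean2 by blast
    then have "f n \<xi> = 0" by (simp add: f_def high_freq_def)
    then have "(INF i. f i \<xi>) \<le> 0" by (metis INF_lower UNIV_I)
    then show ?thesis by simp
  qed
  have "(\<integral>\<^sup>+ x. (INF i. f i x) \<partial>lborel) = (INF i. integral\<^sup>N lborel (f i))"
    by (rule nn_integral_monotone_convergence_INF_AE'[of f lborel, OF _ fmeas f0]) (simp add: fdec)
  then have INFT: "(INF i. T (real i)) = 0" by (simp add: INF0 Tf)
  have decT: "decseq (\<lambda>i. T (real i))"
    unfolding decseq_def T_def by (auto intro: hs_high_anti)
  have limT: "(\<lambda>i. T (real i)) \<longlonglongrightarrow> 0"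
    using LIMSEQ_INF[OF decT] INFT by simp
  show ?thesis
    unfolding order_tendsto_iff
  proof (intro conjI allI impI)
    fix e :: ennreal assume "e > 0"
    then have "eventually (\<lambda>i. T (real i) < e) sequentially"
      using limT unfolding order_tendsto_iff by auto
    then obtain N where N: "T (real N) < e" by (meson eventually_sequentially order_refl)
    have "eventually (\<lambda>x. \<Theta> x \<ge> real N) F" using Th by (simp add: filterlim_at_top)
    then show "eventually (\<lambda>x. hs_sq s (high_freq (\<Theta> x) g) < e) F"
    proof (rule eventually_mono)
      fix x assume "\<Theta> x \<ge> real N"
      then have "hs_sq s (high_freq (\<Theta> x) g) \<le> T (real N)" unfolding T_def by (rule hs_high_anti)
      then show "hs_sq s (high_freq (\<Theta> x) g) < e" using N by simp
    qed
  qed simp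
qed


lemma lf_meas[measurable]:
  assumes [measurable]: "f \<in> borel_measurable borel"
  shows "(\<lambda>\<xi>::'a::euclidean_space. if norm \<xi> < R then f \<xi> else (0::complex)) \<in> borel_measurable borel"
proof -
  have S: "{\<xi>::'a. norm \<xi> < R} \<in> sets borel" by measurable
  show ?thesis by (rule measurable_If) (auto simp: assms S)
qed

lemma diff_meas[measurable]:
  assumes [measurable]: "f \<in> borel_measurable borel" "g \<in> borel_measurable borel"
  shows "(\<lambda>\<xi>::'a::euclidean_space. f \<xi> - g \<xi> :: complex) \<in> borel_measurable borel"
  by measurable

lemma theta_lim:
  fixes t :: "'b \<Rightarrow> real"
  assumes "(t \<longlongrightarrow> 0) F" "eventually (\<lambda>x. t x > 0) F" "c > 0"
  shows "filterlim (\<lambda>x. t x powr (-c)) at_top F"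
proof -
  have "((\<lambda>x. t x powr c) \<longlongrightarrow> 0) F"
  proof (rule tendsto_zero_powrI[OF assms(1)])
    show "((\<lambda>x. c) \<longlongrightarrow> c) F" by simp
    show "\<forall>\<^sub>F x in F. 0 \<le> t x" using assms(2) by (auto elim: eventually_mono)
  qed (use assms in auto)
  then have "filterlim (\<lambda>x. t x powr c) (at_right 0) F"
    by (rule tendsto_imp_filterlim_at_right) (use assms(2) in \<open>auto elim: eventually_mono\<close>)
  then have "filterlim (\<lambda>x. inverse (t x powr c)) at_top F"
    by (rule filterlim_compose[OF filterlim_inverse_at_top_right])
  then show ?thesis by (simp add: powr_minus)
qed


lemma tri1: "cmod (b::complex) \<le> cmod (a - b) + cmod a"
  using norm_triangle_ineq4[of a "a - b"] by (simp add: add.commute)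

theorem lemma1p4:
  fixes U :: "real \<Rightarrow> ('a::euclidean_space \<Rightarrow> complex)"
    and u :: "'a \<Rightarrow> complex"
    and s0 s1 :: real
  assumes "s0 < s1"
    and "\<And>\<epsilon>. \<epsilon> \<in> {0<..1} \<Longrightarrow> U \<epsilon> \<in> borel_measurable lborel"
    and "u \<in> borel_measurable lborel"
    and "\<exists>C::real. \<forall>\<epsilon>\<in>{0<..1}. hnorm s0 (U \<epsilon>) \<le> ennreal C \<and> hnorm s1 (U \<epsilon>) \<le> ennreal C"
    and "((\<lambda>\<epsilon>. hnorm s0 (\<lambda>\<xi>. U \<epsilon> \<xi> - u \<xi>)) \<longlongrightarrow> 0) (at_right 0)"
  shows "((\<lambda>\<epsilon>. hnorm s1 (\<lambda>\<xi>. U \<epsilon> \<xi> - u \<xi>)) \<longlongrightarrow> 0) (at_right 0) \<longleftrightarrow>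
    (\<exists>\<Theta> :: real \<Rightarrow> real.
        (\<forall>\<epsilon>\<in>{0<..1}. \<Theta> \<epsilon> > 0)
      \<and> filterlim \<Theta> at_top (at_right 0)
      \<and> ((\<lambda>\<epsilon>. ennreal (\<Theta> \<epsilon> powr (s1 - s0)) * hnorm s0 (\<lambda>\<xi>. U \<epsilon> \<xi> - u \<xi>)) \<longlongrightarrow> 0) (at_right 0)
      \<and> ((\<lambda>\<epsilon>. hnorm s1 (high_freq (\<Theta> \<epsilon>) (U \<epsilon>))) \<longlongrightarrow> 0) (at_right 0))"
proof -
  define a where "a = s1 - s0"
  have a: "a > 0" using assms(1) by (simp add: a_def)
  obtain C :: real where C: "\<And>\<epsilon>. \<epsilon>\<in>{0<..1} \<Longrightarrow> hnorm s0 (U \<epsilon>) \<le> ennreal C \<and> hnorm s1 (U \<epsilon>) \<le> ennreal C"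
    using assms(4) by blast
  define K where "K = (ennreal C)^2"
  have Kfin: "K < \<infinity>" by (simp add: K_def power_less_top_ennreal)
  have UK: "hs_sq s1 (U \<epsilon>) \<le> K" if "\<epsilon>\<in>{0<..1}" for \<epsilon>
    using power_mono[OF conjunct2[OF C[OF that]], of 2] by (simp add: hnorm_sq K_def)
  have Um[measurable]: "U \<epsilon> \<in> borel_measurable borel" if "\<epsilon>\<in>{0<..1}" for \<epsilon>
    using assms(2)[OF that] by simp
  have um[measurable]: "u \<in> borel_measurable borel" using assms(3) by simp
  have ev01: "eventually (\<lambda>\<epsilon>. \<epsilon> \<in> {0<..1}) (at_right (0::real))"
    unfolding eventually_at_right_field by (intro exI[of _ 1]) auto
  define D where "D \<epsilon> = (\<lambda>\<xi>. U \<epsilon> \<xi> - u \<xi>)" for \<epsilon>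
  have Dm[measurable]: "D \<epsilon> \<in> borel_measurable borel" if "\<epsilon>\<in>{0<..1}" for \<epsilon>
    unfolding D_def using Um[OF that] um by measurable
  define N0 where "N0 \<epsilon> = hs_sq s0 (D \<epsilon>)" for \<epsilon>
  define N1 where "N1 \<epsilon> = hs_sq s1 (D \<epsilon>)" for \<epsilon>
  have N0lim: "(N0 \<longlongrightarrow> 0) (at_right 0)"
    using tendsto_sq_iff[THEN iffD1, OF assms(5)] unfolding N0_def D_def by (simp add: hnorm_sq)
  have iff1: "((\<lambda>\<epsilon>. hnorm s1 (\<lambda>\<xi>. U \<epsilon> \<xi> - u \<xi>)) \<longlongrightarrow> 0) (at_right 0) \<longleftrightarrow> (N1 \<longlongrightarrow> 0) (at_right 0)"
    unfolding N1_def D_def by (subst tendsto_sq_iff) (simp add: hnorm_sq)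
  have iff3: "((\<lambda>\<epsilon>. ennreal (\<Theta> \<epsilon> powr (s1 - s0)) * hnorm s0 (\<lambda>\<xi>. U \<epsilon> \<xi> - u \<xi>)) \<longlongrightarrow> 0) (at_right 0)
     \<longleftrightarrow> ((\<lambda>\<epsilon>. ennreal (\<Theta> \<epsilon> powr (2*a)) * N0 \<epsilon>) \<longlongrightarrow> 0) (at_right 0)" for \<Theta>
  proof -
    have "(\<Theta> \<epsilon> powr (s1 - s0))^2 = \<Theta> \<epsilon> powr (2*a)" for \<epsilon>
      by (simp add: a_def power2_eq_square powr_add[symmetric])
    then show ?thesis
      unfolding N0_def D_def by (subst tendsto_sq_iff) (simp add: mult_sq)
  qed
  have iff4: "((\<lambda>\<epsilon>. hnorm s1 (high_freq (\<Theta> \<epsilon>) (U \<epsilon>))) \<longlongrightarrow> 0) (at_right 0)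
     \<longleftrightarrow> ((\<lambda>\<epsilon>. hs_sq s1 (high_freq (\<Theta> \<epsilon>) (U \<epsilon>))) \<longlongrightarrow> 0) (at_right 0)" for \<Theta>
    by (subst tendsto_sq_iff) (simp add: hnorm_sq)
  show ?thesis
    unfolding iff1 iff3 iff4
  proof
    assume N1lim: "(N1 \<longlongrightarrow> 0) (at_right 0)"
    show "\<exists>\<Theta>. (\<forall>\<epsilon>\<in>{0<..1}. 0 < \<Theta> \<epsilon>) \<and> filterlim \<Theta> at_top (at_right 0) \<and>
      ((\<lambda>\<epsilon>. ennreal (\<Theta> \<epsilon> powr (2 * a)) * N0 \<epsilon>) \<longlongrightarrow> 0) (at_right 0) \<and>
      ((\<lambda>\<epsilon>. hs_sq s1 (high_freq (\<Theta> \<epsilon>) (U \<epsilon>))) \<longlongrightarrow> 0) (at_right 0)"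
    proof -
      have "eventually (\<lambda>\<epsilon>. \<epsilon> \<in> {0<..1} \<and> N1 \<epsilon> < 1) (at_right 0)"
      proof -
        have "eventually (\<lambda>\<epsilon>. N1 \<epsilon> < 1) (at_right 0)"
          using N1lim unfolding order_tendsto_iff by auto
        then show ?thesis using eventually_conj[OF ev01] by blast
      qed
      then obtain e0 where e0: "e0 \<in> {0<..1}" "N1 e0 < 1"
        using eventually_happens[of _ "at_right (0::real)"] by auto
      have "hs_sq s1 u \<le> 2 * hs_sq s1 (D e0) + 2 * hs_sq s1 (U e0)"
      proof (rule hs_tri[OF Dm[OF e0(1)] Um[OF e0(1)]])
        show "cmod (u \<xi>) \<le> cmod (D e0 \<xi>) + cmod (U e0 \<xi>)" for \<xi>
          unfolding D_def by (rule tri1)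
      qed
      also have "\<dots> < \<infinity>"
      proof -
        have f1: "N1 e0 < \<infinity>" using e0(2) less_trans[of "N1 e0" 1 top] by simp
        have f2: "hs_sq s1 (U e0) < \<infinity>" using UK[OF e0(1)] Kfin by (rule le_less_trans)
        show ?thesis using f1 f2 unfolding N1_def by (simp add: ennreal_mult_less_top)
      qed
      finally have ufin: "hs_sq s1 u < \<infinity>" .
      define r where "r \<epsilon> = enn2real (N0 \<epsilon>)" for \<epsilon>
      have rlim: "(r \<longlongrightarrow> 0) (at_right 0)"
        using tendsto_enn2real[of N0 0 "at_right 0"] N0lim unfolding r_def by simp
      have r0: "r \<epsilon> \<ge> 0" for \<epsilon> by (simp add: r_def)
      define t where "t \<epsilon> = \<epsilon> + r \<epsilon>" for \<epsilon>
      have tpos: "t \<epsilon> > 0" if "\<epsilon> > 0" for \<epsilon> using r0[of \<epsilon>] that by (simp add: t_def)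
      have tlim: "(t \<longlongrightarrow> 0) (at_right 0)"
        unfolding t_def using tendsto_add[OF tendsto_ident_at rlim] by simp
      have evpos: "eventually (\<lambda>\<epsilon>. \<epsilon> > 0) (at_right (0::real))"
        by (simp add: eventually_at_right_less)
      define \<Theta> where "\<Theta> \<epsilon> = t \<epsilon> powr (-(1/(4*a)))" for \<epsilon>
      have P1: "\<forall>\<epsilon>\<in>{0<..1}. 0 < \<Theta> \<epsilon>"
        using tpos by (force simp: \<Theta>_def)
      have P2: "filterlim \<Theta> at_top (at_right 0)"
        unfolding \<Theta>_def
        by (rule theta_lim[OF tlim]) (use evpos tpos a in \<open>auto elim: eventually_mono\<close>)
      have P3: "((\<lambda>\<epsilon>. ennreal (\<Theta> \<epsilon> powr (2 * a)) * N0 \<epsilon>) \<longlongrightarrow> 0) (at_right 0)"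
      proof -
        have evfin: "eventually (\<lambda>\<epsilon>. N0 \<epsilon> < 1) (at_right 0)"
          using N0lim unfolding order_tendsto_iff by auto
        have eq: "eventually (\<lambda>\<epsilon>. ennreal (\<Theta> \<epsilon> powr (2 * a)) * N0 \<epsilon> = ennreal (t \<epsilon> powr (-(1/2)) * r \<epsilon>)) (at_right 0)"
          using evfin evpos
        proof eventually_elim
          case (elim \<epsilon>)
          have "N0 \<epsilon> = ennreal (r \<epsilon>)"
            using elim(1) unfolding r_def
            by (metis ennreal_1 ennreal_enn2real ennreal_less_top less_trans less_top)
          moreover have "\<Theta> \<epsilon> powr (2 * a) = t \<epsilon> powr (-(1/2))"
            using a by (simp add: \<Theta>_def powr_powr)
          ultimately show ?case using r0[of \<epsilon>] by (simp add: ennreal_mult)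
        qed
        have "((\<lambda>\<epsilon>. t \<epsilon> powr (-(1/2)) * r \<epsilon>) \<longlongrightarrow> 0) (at_right 0)"
        proof (rule tendsto_sandwich[of "\<lambda>_. 0" _ _ "\<lambda>\<epsilon>. sqrt (t \<epsilon>)"])
          show "eventually (\<lambda>\<epsilon>. 0 \<le> t \<epsilon> powr (-(1/2)) * r \<epsilon>) (at_right 0)"
            using r0 by simp
          show "eventually (\<lambda>\<epsilon>. t \<epsilon> powr (-(1/2)) * r \<epsilon> \<le> sqrt (t \<epsilon>)) (at_right 0)"
            using evpos
          proof eventually_elim
            case (elim \<epsilon>)
            have tp: "t \<epsilon> > 0" using tpos elim by simp
            have "t \<epsilon> powr (-(1/2)) * r \<epsilon> \<le> t \<epsilon> powr (-(1/2)) * t \<epsilon>"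
              by (intro mult_left_mono) (auto simp: t_def elim less_imp_le)
            also have "\<dots> = t \<epsilon> powr (-(1/2)) * t \<epsilon> powr 1" using tp by simp
            also have "\<dots> = t \<epsilon> powr (1/2)" unfolding powr_add[symmetric] by simp
            also have "\<dots> = sqrt (t \<epsilon>)" using tp by (simp add: powr_half_sqrt)
            finally show ?case .
          qed
          show "((\<lambda>\<epsilon>. sqrt (t \<epsilon>)) \<longlongrightarrow> 0) (at_right 0)"
            using tendsto_real_sqrt[OF tlim] by simp
        qed simp
        then have "((\<lambda>\<epsilon>. ennreal (t \<epsilon> powr (-(1/2)) * r \<epsilon>)) \<longlongrightarrow> ennreal 0) (at_right 0)"
          by (rule tendsto_ennrealI)
        then show ?thesis using tendsto_cong[OF eq] by simp
      qed
      have P4: "((\<lambda>\<epsilon>. hs_sq s1 (high_freq (\<Theta> \<epsilon>) (U \<epsilon>))) \<longlongrightarrow> 0) (at_right 0)"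
      proof (rule tendsto_sandwich[of "\<lambda>_. 0" _ _ "\<lambda>\<epsilon>. 2 * N1 \<epsilon> + 2 * hs_sq s1 (high_freq (\<Theta> \<epsilon>) u)"])
        show "eventually (\<lambda>\<epsilon>. hs_sq s1 (high_freq (\<Theta> \<epsilon>) (U \<epsilon>)) \<le> 2 * N1 \<epsilon> + 2 * hs_sq s1 (high_freq (\<Theta> \<epsilon>) u)) (at_right 0)"
          using ev01
        proof eventually_elim
          case (elim \<epsilon>)
          show ?case unfolding N1_def
          proof (rule hs_tri[OF Dm[OF elim] hf_meas[OF um]])
            show "cmod (high_freq (\<Theta> \<epsilon>) (U \<epsilon>) \<xi>) \<le> cmod (D \<epsilon> \<xi>) + cmod (high_freq (\<Theta> \<epsilon>) u \<xi>)" for \<xi>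
              using norm_triangle_ineq[of "U \<epsilon> \<xi> - u \<xi>" "u \<xi>"] by (auto simp: high_freq_def D_def)
          qed
        qed
        have "((\<lambda>\<epsilon>. 2 * N1 \<epsilon> + 2 * hs_sq s1 (high_freq (\<Theta> \<epsilon>) u)) \<longlongrightarrow> 2 * 0 + 2 * 0) (at_right 0)"
          by (intro tendsto_add ennreal_tendsto_cmult N1lim hs_tail[OF um ufin P2]) simp_all
        then show "((\<lambda>\<epsilon>. 2 * N1 \<epsilon> + 2 * hs_sq s1 (high_freq (\<Theta> \<epsilon>) u)) \<longlongrightarrow> 0) (at_right 0)" by simp
      qed simp_all
      show ?thesis using P1 P2 P3 P4 by blast
    qed
  next
    assume "\<exists>\<Theta>. (\<forall>\<epsilon>\<in>{0<..1}. 0 < \<Theta> \<epsilon>) \<and> filterlim \<Theta> at_top (at_right 0) \<and>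
      ((\<lambda>\<epsilon>. ennreal (\<Theta> \<epsilon> powr (2 * a)) * N0 \<epsilon>) \<longlongrightarrow> 0) (at_right 0) \<and>
      ((\<lambda>\<epsilon>. hs_sq s1 (high_freq (\<Theta> \<epsilon>) (U \<epsilon>))) \<longlongrightarrow> 0) (at_right 0)"
    then obtain \<Theta> where Tpos: "\<And>\<epsilon>. \<epsilon>\<in>{0<..1} \<Longrightarrow> 0 < \<Theta> \<epsilon>" and Tlim: "filterlim \<Theta> at_top (at_right 0)"
      and T3: "((\<lambda>\<epsilon>. ennreal (\<Theta> \<epsilon> powr (2 * a)) * N0 \<epsilon>) \<longlongrightarrow> 0) (at_right 0)"
      and T4: "((\<lambda>\<epsilon>. hs_sq s1 (high_freq (\<Theta> \<epsilon>) (U \<epsilon>))) \<longlongrightarrow> 0) (at_right 0)"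
      by blast
    have ulow: "hs_sq s1 (\<lambda>\<xi>. if norm \<xi> < real (Suc n) then u \<xi> else 0) \<le> 2 * K" for n
    proof -
      define R where "R = real (Suc n)"
      have R: "R > 0" by (simp add: R_def)
      have ev: "eventually (\<lambda>\<epsilon>. hs_sq s1 (\<lambda>\<xi>. if norm \<xi> < R then u \<xi> else 0)
                 \<le> 2 * (ennreal (R powr (2*a)) * N0 \<epsilon>) + 2 * K) (at_right 0)"
        using ev01
      proof eventually_elim
        case (elim \<epsilon>)
        have "hs_sq s1 (\<lambda>\<xi>. if norm \<xi> < R then u \<xi> else 0)
              \<le> 2 * hs_sq s1 (\<lambda>\<xi>. if norm \<xi> < R then D \<epsilon> \<xi> else 0) + 2 * hs_sq s1 (U \<epsilon>)"
        proof (rule hs_tri[OF lf_meas[OF Dm[OF elim]] Um[OF elim]])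
          show "cmod (if norm \<xi> < R then u \<xi> else 0) \<le> cmod (if norm \<xi> < R then D \<epsilon> \<xi> else 0) + cmod (U \<epsilon> \<xi>)" for \<xi>
            using tri1[of "u \<xi>" "U \<epsilon> \<xi>"] by (simp add: D_def)
        qed
        also have "\<dots> \<le> 2 * (ennreal (R powr (2*a)) * N0 \<epsilon>) + 2 * K"
        proof (intro add_mono mult_left_mono)
          show "hs_sq s1 (\<lambda>\<xi>. if norm \<xi> < R then D \<epsilon> \<xi> else 0) \<le> ennreal (R powr (2*a)) * N0 \<epsilon>"
            unfolding N0_def a_def using hs_low[OF Dm[OF elim] R, of s0 s1] assms(1) by simp
          show "hs_sq s1 (U \<epsilon>) \<le> K" by (rule UK[OF elim])
        qed simp_all
        finally show ?case .
      qed
      have lim: "((\<lambda>\<epsilon>. 2 * (ennreal (R powr (2*a)) * N0 \<epsilon>) + 2 * K) \<longlongrightarrow> 2 * (ennreal (R powr (2*a)) * 0) + 2 * K) (at_right 0)"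
        by (intro tendsto_add tendsto_const ennreal_tendsto_cmult N0lim) simp_all
      have "hs_sq s1 (\<lambda>\<xi>. if norm \<xi> < R then u \<xi> else 0) \<le> 2 * (ennreal (R powr (2*a)) * 0) + 2 * K"
        by (rule tendsto_le[OF _ lim tendsto_const ev]) simp
      then show ?thesis by (simp add: R_def)
    qed
    have ufin: "hs_sq s1 u < \<infinity>"
    proof -
      define f where "f i \<xi> = ennreal ((norm \<xi> powr s1 * cmod (if norm \<xi> < real (Suc i) then u \<xi> else 0))\<^sup>2)" for i \<xi>
      have inc: "incseq f"
        unfolding incseq_def le_fun_def f_def by auto
      have fm: "f i \<in> borel_measurable lborel" for i
        unfolding f_def by measurable
      have sup: "(SUP i. f i \<xi>) = ennreal ((norm \<xi> powr s1 * cmod (u \<xi>))\<^sup>2)" for \<xi>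
      proof (rule antisym)
        show "(SUP i. f i \<xi>) \<le> ennreal ((norm \<xi> powr s1 * cmod (u \<xi>))\<^sup>2)"
          by (rule SUP_least) (auto simp: f_def)
        obtain n :: nat where "norm \<xi> < real n" using reals_Archimedean2 by blast
        then have "f n \<xi> = ennreal ((norm \<xi> powr s1 * cmod (u \<xi>))\<^sup>2)" by (simp add: f_def)
        then show "ennreal ((norm \<xi> powr s1 * cmod (u \<xi>))\<^sup>2) \<le> (SUP i. f i \<xi>)"
          by (metis SUP_upper UNIV_I)
      qed
      have "hs_sq s1 u = (\<integral>\<^sup>+ \<xi>. (SUP i. f i \<xi>) \<partial>lborel)"
        unfolding hs_sq_def sup ..
      also have "\<dots> = (SUP i. integral\<^sup>N lborel (f i))"
        by (rule nn_integral_monotone_convergence_SUP[OF inc fm])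
      also have "\<dots> \<le> 2 * K"
      proof (rule SUP_least)
        fix i show "integral\<^sup>N lborel (f i) \<le> 2 * K"
          using ulow[of i] unfolding hs_sq_def f_def by simp
      qed
      also have "\<dots> < \<infinity>" using Kfin by (simp add: ennreal_mult_less_top)
      finally show ?thesis .
    qed
    show "(N1 \<longlongrightarrow> 0) (at_right 0)"
    proof (rule tendsto_sandwich[of "\<lambda>_. 0" _ _ "\<lambda>\<epsilon>. 2 * (ennreal (\<Theta> \<epsilon> powr (2*a)) * N0 \<epsilon>) + 2 * (2 * hs_sq s1 (high_freq (\<Theta> \<epsilon>) (U \<epsilon>)) + 2 * hs_sq s1 (high_freq (\<Theta> \<epsilon>) u))"])
      show "eventually (\<lambda>\<epsilon>. N1 \<epsilon> \<le> 2 * (ennreal (\<Theta> \<epsilon> powr (2*a)) * N0 \<epsilon>) + 2 * (2 * hs_sq s1 (high_freq (\<Theta> \<epsilon>) (U \<epsilon>)) + 2 * hs_sq s1 (high_freq (\<Theta> \<epsilon>) u))) (at_right 0)"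
        using ev01
      proof eventually_elim
        case (elim \<epsilon>)
        have 1: "N1 \<epsilon> \<le> 2 * hs_sq s1 (\<lambda>\<xi>. if norm \<xi> < \<Theta> \<epsilon> then D \<epsilon> \<xi> else 0)
            + 2 * hs_sq s1 (\<lambda>\<xi>. high_freq (\<Theta> \<epsilon>) (U \<epsilon>) \<xi> - high_freq (\<Theta> \<epsilon>) u \<xi>)"
          unfolding N1_def
        proof (rule hs_tri[OF lf_meas[OF Dm[OF elim]] diff_meas[OF hf_meas[OF Um[OF elim]] hf_meas[OF um]]])
          show "cmod (D \<epsilon> \<xi>) \<le> cmod (if norm \<xi> < \<Theta> \<epsilon> then D \<epsilon> \<xi> else 0) + cmod (high_freq (\<Theta> \<epsilon>) (U \<epsilon>) \<xi> - high_freq (\<Theta> \<epsilon>) u \<xi>)" for \<xi>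
            by (auto simp: high_freq_def D_def)
        qed
        have 2: "hs_sq s1 (\<lambda>\<xi>. high_freq (\<Theta> \<epsilon>) (U \<epsilon>) \<xi> - high_freq (\<Theta> \<epsilon>) u \<xi>)
            \<le> 2 * hs_sq s1 (high_freq (\<Theta> \<epsilon>) (U \<epsilon>)) + 2 * hs_sq s1 (high_freq (\<Theta> \<epsilon>) u)"
          by (rule hs_tri[OF hf_meas[OF Um[OF elim]] hf_meas[OF um]]) (rule norm_triangle_ineq4)
        have 3: "hs_sq s1 (\<lambda>\<xi>. if norm \<xi> < \<Theta> \<epsilon> then D \<epsilon> \<xi> else 0) \<le> ennreal (\<Theta> \<epsilon> powr (2*a)) * N0 \<epsilon>"
          unfolding N0_def a_def using hs_low[OF Dm[OF elim] Tpos[OF elim], of s0 s1] assms(1) by simp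
        have "2 * hs_sq s1 (\<lambda>\<xi>. if norm \<xi> < \<Theta> \<epsilon> then D \<epsilon> \<xi> else 0)
            + 2 * hs_sq s1 (\<lambda>\<xi>. high_freq (\<Theta> \<epsilon>) (U \<epsilon>) \<xi> - high_freq (\<Theta> \<epsilon>) u \<xi>)
            \<le> 2 * (ennreal (\<Theta> \<epsilon> powr (2*a)) * N0 \<epsilon>) + 2 * (2 * hs_sq s1 (high_freq (\<Theta> \<epsilon>) (U \<epsilon>)) + 2 * hs_sq s1 (high_freq (\<Theta> \<epsilon>) u))"
          by (intro add_mono mult_left_mono 2 3) simp_all
        with 1 show ?case by (rule order_trans)
      qed
      have "((\<lambda>\<epsilon>. 2 * (ennreal (\<Theta> \<epsilon> powr (2*a)) * N0 \<epsilon>) + 2 * (2 * hs_sq s1 (high_freq (\<Theta> \<epsilon>) (U \<epsilon>)) + 2 * hs_sq s1 (high_freq (\<Theta> \<epsilon>) u))) \<longlongrightarrow> 2 * 0 + 2 * (2 * 0 + 2 * 0)) (at_right 0)"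
        by (intro tendsto_add ennreal_tendsto_cmult T3 T4 hs_tail[OF um ufin Tlim]) simp_all
      then show "((\<lambda>\<epsilon>. 2 * (ennreal (\<Theta> \<epsilon> powr (2*a)) * N0 \<epsilon>) + 2 * (2 * hs_sq s1 (high_freq (\<Theta> \<epsilon>) (U \<epsilon>)) + 2 * hs_sq s1 (high_freq (\<Theta> \<epsilon>) u))) \<longlongrightarrow> 0) (at_right 0)"
        by simp
    qed simp_all
  qed
qed

end
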